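(* Let $H$ be the 28-element set $H=\{n_M : n\in\mathbb{Z}_{12}\}\cup\{n_m : n\in\mathbb{Z}_{12}\}\cup\{n_{\mathrm{aug}} : n\in\{0,1,2,3\}\}$, and let $\mathcal{S}$ be the symmetric relation on $H$ consisting exactly of the pairs $(n_M,n_m)$, $(n_M,(n+4)_m)$, $(n_M,(n\bmod 4)_{\mathrm{aug}})$, $(n_m,n_M)$, $(n_m,(n+8)_M)$, $(n_m,((n+3)\bmod 4)_{\mathrm{aug}})$ for $n\in\mathbb{Z}_{12}$, together with the reverses of all these pairs. Then the monoid $M_{\mathcal{S}}$ of relations on $H$ generated by $\mathcal{S}$ under composition of relations has the presentation $M_{\mathcal{S}}=\langle \mathcal{S}\mid \mathcal{S}^7=\mathcal{S}^5\rangle$.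
   Context: Indices $n$ of $n_M,n_m$ are taken modulo 12; the elements of $H$ are formal labels (musically: $n_M=\{n,n+4,n+7\}$, $n_m=\{n,n+3,n+7\}$, $k_{\mathrm{aug}}=\{k,k+4,k+8\}$ in $\mathbb{Z}_{12}$; $\mathcal{S}$ is Douthett's relation $\mathcal{P}_{1,0}$ of moving one pitch class by a semitone). Composition of relations: $\mathcal{R}'\mathcal{R}$ is the set of pairs $(x,z)$ such that there exists $y$ with $(x,y)\in\mathcal{R}$ and $(y,z)\in\mathcal{R}'$; the monoid identity is the identity relation on $H$. *)

theory Defs
  imports Main "HOL-Library.Numeral_Type"
begin

text \<open>The type chord is exactly the set H, so the identity
  relation Id on this type is the identity relation on H.\<close>
datatype chord = Maj "12" | Min "12" | Aug "4"

text \<open>n mod 4 for n in Z_12, as an element of Z_4 (Rep_bit0 n is the representative in 0..11).\<close>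
definition mod4 :: "12 \<Rightarrow> 4" where
  "mod4 n = of_int (Rep_bit0 n)"

definition S_gen :: "(chord \<times> chord) set" where
  "S_gen = (\<Union>n::12. {(Maj n, Min n), (Maj n, Min (n + 4)), (Maj n, Aug (mod4 n)),
                        (Min n, Maj n), (Min n, Maj (n + 8)), (Min n, Aug (mod4 (n + 3)))})"

definition S_rel :: "(chord \<times> chord) set" where
  "S_rel = S_gen \<union> S_gen\<inverse>"

end

theory Submission
  imports Defs
begin

datatype bv = BV bool bool bool bool bool bool bool bool bool bool bool bool bool bool bool bool bool bool bool bool bool bool bool bool bool bool bool bool

fun bl :: "bv \<Rightarrow> bool list" where
  "bl (BV a0 a1 a2 a3 a4 a5 a6 a7 a8 a9 a10 a11 a12 a13 a14 a15 a16 a17 a18 a19 a20 a21 a22 a23 a24 a25 a26 a27) = [a0, a1, a2, a3, a4, a5, a6, a7, a8, a9, a10, a11, a12, a13, a14, a15, a16, a17, a18, a19, a20, a21, a22, a23, a24, a25, a26, a27]"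

fun F :: "bv \<Rightarrow> bv" where
  "F (BV a0 a1 a2 a3 a4 a5 a6 a7 a8 a9 a10 a11 a12 a13 a14 a15 a16 a17 a18 a19 a20 a21 a22 a23 a24 a25 a26 a27) = BV (a12 \<or> a16 \<or> a24) (a13 \<or> a17 \<or> a25) (a14 \<or> a18 \<or> a26) (a15 \<or> a19 \<or> a27) (a16 \<or> a20 \<or> a24) (a17 \<or> a21 \<or> a25) (a18 \<or> a22 \<or> a26) (a19 \<or> a23 \<or> a27) (a12 \<or> a20 \<or> a24) (a13 \<or> a21 \<or> a25) (a14 \<or> a22 \<or> a26) (a15 \<or> a23 \<or> a27) (a0 \<or> a8 \<or> a27) (a1 \<or> a9 \<or> a24) (a2 \<or> a10 \<or> a25) (a3 \<or> a11 \<or> a26) (a0 \<or> a4 \<or> a27) (a1 \<or> a5 \<or> a24) (a2 \<or> a6 \<or> a25) (a3 \<or> a7 \<or> a26) (a4 \<or> a8 \<or> a27) (a5 \<or> a9 \<or> a24) (a6 \<or> a10 \<or> a25) (a7 \<or> a11 \<or> a26) (a0 \<or> a4 \<or> a8 \<or> a13 \<or> a17 \<or> a21) (a1 \<or> a5 \<or> a9 \<or> a14 \<or> a18 \<or> a22) (a2 \<or> a6 \<or> a10 \<or> a15 \<or> a19 \<or> a23) (a3 \<or> a7 \<or> a11 \<or> a12 \<or> a16 \<or> a20)"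

definition unit :: "nat \<Rightarrow> bv" where
  "unit i = BV (i = 0) (i = 1) (i = 2) (i = 3) (i = 4) (i = 5) (i = 6) (i = 7) (i = 8) (i = 9) (i = 10) (i = 11) (i = 12) (i = 13) (i = 14) (i = 15) (i = 16) (i = 17) (i = 18) (i = 19) (i = 20) (i = 21) (i = 22) (i = 23) (i = 24) (i = 25) (i = 26) (i = 27)"


definition e :: "chord \<Rightarrow> nat" where
  "e c = (case c of Maj n \<Rightarrow> nat (Rep_bit0 n) | Min n \<Rightarrow> 12 + nat (Rep_bit0 n)
     | Aug k \<Rightarrow> 24 + nat (Rep_bit0 k))"

lemma Rep12_add: "Rep_bit0 (x + y :: 12) = (Rep_bit0 x + Rep_bit0 y) mod 12"
  using bit0.Rep_Abs_mod[where 'a="6"] by (simp add: bit0.add_def)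

lemma Rep12_num: "Rep_bit0 (numeral w :: 12) = numeral w mod 12"
  by (simp add: bit0.Rep_numeral)

lemma Rep_mod4: "Rep_bit0 (mod4 n) = Rep_bit0 n mod 4"
  unfolding mod4_def using bit0.Rep_Abs_mod[where 'a="2"] by (simp add: bit0.of_int_eq)

lemma Rep12_range: "Rep_bit0 (n::12) \<in> {0..<12}"
  using bit0.Rep_less_n[where x=n] bit0.Rep_le_n[where x=n] Rep_bit0[of n] by auto

lemma Rep4_range: "Rep_bit0 (n::4) \<in> {0..<4}"
  using Rep_bit0[of n] by auto

lemma Rep12_surj: "i \<in> {0..<12} \<Longrightarrow> \<exists>n::12. Rep_bit0 n = i"
proof -
  assume "i \<in> {0..<12}"
  then have "Rep_bit0 (Abs_bit0 i :: 12) = i" by (simp add: Abs_bit0_inverse)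
  then show ?thesis by blast
qed

definition GL :: "int \<Rightarrow> (nat \<times> nat) list" where
  "GL i = [(nat i, 12 + nat i), (nat i, 12 + nat ((i+4) mod 12)), (nat i, 24 + nat (i mod 4)),
          (12 + nat i, nat i), (12 + nat i, nat ((i + 8) mod 12)), (12 + nat i, 24 + nat ((i + 3) mod 4))]"

definition G :: "int \<Rightarrow> (nat \<times> nat) set" where "G i = set (GL i)"

lemma img_gen: "map_prod e e ` S_gen = (\<Union>i\<in>{0..<12}. G i)"
proof -
  have 1: "map_prod e e ` S_gen = (\<Union>n::12. G (Rep_bit0 n))"
    unfolding S_gen_def G_def GL_def e_def image_UN
    by (simp add: Rep12_add Rep12_num Rep_mod4 mod_mod_cancel)
  have "(\<Union>n::12. G (Rep_bit0 n)) = (\<Union>i\<in>{0..<12}. G i)"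
    using Rep12_range Rep12_surj by (auto, metis, blast)
  with 1 show ?thesis by simp
qed

definition TL :: "(nat \<times> nat) list" where
  "TL = concat (map GL [0..11]) @ map prod.swap (concat (map GL [0..11]))"

lemma T_eq: "map_prod e e ` S_rel = set TL"
proof -
  have "map_prod e e ` S_rel = map_prod e e ` S_gen \<union> (map_prod e e ` S_gen)\<inverse>"
    unfolding S_rel_def by auto
  also have "map_prod e e ` S_gen = set (concat (map GL [0..11]))"
  proof -
    have "{0..<12::int} = {0..11}" by auto
    then show ?thesis unfolding img_gen G_def set_concat set_map set_upto image_image by simp
  qed
  finally show ?thesis unfolding TL_def by auto
qed


lemma TL_val: "TL = [(0,12), (0,16), (0,24), (12,0), (12,8), (12,27), (1,13), (1,17), (1,25), (13,1), (13,9), (13,24), (2,14), (2,18), (2,26), (14,2), (14,10), (14,25), (3,15), (3,19), (3,27), (15,3), (15,11), (15,26), (4,16), (4,20), (4,24), (16,4), (16,0), (16,27), (5,17), (5,21), (5,25), (17,5), (17,1), (17,24), (6,18), (6,22), (6,26), (18,6), (18,2), (18,25), (7,19), (7,23), (7,27), (19,7), (19,3), (19,26), (8,20), (8,12), (8,24), (20,8), (20,4), (20,27), (9,21), (9,13), (9,25), (21,9), (21,5), (21,24), (10,22), (10,14), (10,26), (22,10), (22,6), (22,25), (11,23), (11,15), (11,27), (23,11), (23,7), (23,26), (12,0), (16,0), (24,0), (0,12), (8,12), (27,12), (13,1), (17,1), (25,1), (1,13), (9,13), (24,13), (14,2), (18,2), (26,2), (2,14), (10,14), (25,14), (15,3),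 (19,3), (27,3), (3,15), (11,15), (26,15), (16,4), (20,4), (24,4), (4,16), (0,16), (27,16), (17,5), (21,5), (25,5), (5,17), (1,17), (24,17), (18,6), (22,6), (26,6), (6,18), (2,18), (25,18), (19,7), (23,7), (27,7), (7,19), (3,19), (26,19), (20,8), (12,8), (24,8), (8,20), (4,20), (27,20), (21,9), (13,9), (25,9), (9,21), (5,21), (24,21), (22,10), (14,10), (26,10), (10,22), (6,22), (25,22), (23,11), (15,11), (27,11), (11,23), (7,23), (26,23)]"
  by (simp add: TL_def GL_def upto.simps)

lemma nat28: "(y::nat) < 28 \<Longrightarrow> y = 0 \<or> y = 1 \<or> y = 2 \<or> y = 3 \<or> y = 4 \<or> y = 5 \<or> y = 6 \<or> y = 7 \<or> y = 8 \<or> y = 9 \<or> y = 10 \<or> y = 11 \<or> y = 12 \<or> y = 13 \<or> y = 14 \<or> y = 15 \<or> y = 16 \<or> y = 17 \<or> y = 18 \<or> y = 19 \<or> y = 20 \<or> y = 21 \<or> y = 22 \<or> y = 23 \<or> y = 24 \<or> y = 25 \<or> y = 26 \<or> y = 27"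
  by arith

lemma F_nth: "y < 28 \<Longrightarrow> bl (F b) ! y = (\<exists>z. (z, y) \<in> set TL \<and> bl b ! z)"
  apply (cases b)
  apply (drule nat28)
  apply (elim disjE)
  apply (simp_all add: TL_val conj_disj_distribR ex_disj_distrib)
  apply blast+
  done

lemma Rep_nonneg: "0 \<le> Rep_bit0 n" using Rep_bit0[of n] by auto

lemma Rep12_lt [simp]: "Rep_bit0 (n::12) < 12" using Rep12_range[of n] by simp
lemma Rep4_lt [simp]: "Rep_bit0 (n::4) < 4" using Rep4_range[of n] by simp
declare Rep_nonneg [simp]

lemma nR12: "nat (Rep_bit0 (n::12)) < 12" by (simp add: nat_less_iff)
lemma nR4: "nat (Rep_bit0 (n::4)) < 4" by (simp add: nat_less_iff)

lemma eM: "e (Maj n) < 12" using nR12[of n] by (simp add: e_def)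
lemma eN: "12 \<le> e (Min n) \<and> e (Min n) < 24" using nR12[of n] by (simp add: e_def)
lemma eA: "24 \<le> e (Aug n) \<and> e (Aug n) < 28" using nR4[of n] by (simp add: e_def)

lemma e_inj: "inj e"
proof (rule injI)
  fix x y assume h: "e x = e y"
  then show "x = y"
    apply (cases x; cases y)
    subgoal by (simp add: e_def Rep_bit0_inject[symmetric] eq_nat_nat_iff)
    subgoal for a b using eM[of a] eN[of b] by simp
    subgoal for a b using eM[of a] eA[of b] by simp
    subgoal for a b using eN[of a] eM[of b] by simp
    subgoal by (simp add: e_def Rep_bit0_inject[symmetric] eq_nat_nat_iff)
    subgoal for a b using eN[of a] eA[of b] by simp
    subgoal for a b using eA[of a] eM[of b] by simp
    subgoal for a b using eA[of a] eN[of b] by simp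
    subgoal by (simp add: e_def Rep_bit0_inject[symmetric] eq_nat_nat_iff)
    done
qed

lemma e_lt: "e c < 28"
  apply (cases c)
  subgoal for a using eM[of a] by simp
  subgoal for a using eN[of a] by simp
  subgoal for a using eA[of a] by simp
  done

lemma e_surj: "i < 28 \<Longrightarrow> \<exists>c. e c = i"
proof -
  assume i: "i < 28"
  consider "i < 12" | "12 \<le> i \<and> i < 24" | "24 \<le> i" using i by linarith
  then show ?thesis
  proof cases
    case 1
    then obtain n :: 12 where "Rep_bit0 n = int i" using Rep12_surj[of "int i"] by auto
    then have "e (Maj n) = i" by (simp add: e_def)
    then show ?thesis by blast
  next
    case 2
    then obtain n :: 12 where "Rep_bit0 n = int (i - 12)" using Rep12_surj[of "int (i - 12)"] by auto
    then have "e (Min n) = i" using 2 by (simp add: e_def) arith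
    then show ?thesis by blast
  next
    case 3
    have "Rep_bit0 (Abs_bit0 (int (i - 24)) :: 4) = int (i - 24)"
      using 3 i by (simp add: Abs_bit0_inverse)
    then have "e (Aug (Abs_bit0 (int (i - 24)))) = i" using 3 by (simp add: e_def)
    then show ?thesis by blast
  qed
qed

lemma img_step: "S_rel `` {c. bl b ! e c} = {c. bl (F b) ! e c}"
proof -
  have "bl (F b) ! e c \<longleftrightarrow> (\<exists>d. (d, c) \<in> S_rel \<and> bl b ! e d)" for c
  proof -
    have "bl (F b) ! e c \<longleftrightarrow> (\<exists>z. (z, e c) \<in> map_prod e e ` S_rel \<and> bl b ! z)"
      using F_nth[OF e_lt] T_eq by simp
    also have "\<dots> \<longleftrightarrow> (\<exists>d. (d, c) \<in> S_rel \<and> bl b ! e d)"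
      using e_inj[unfolded inj_def] by force
    finally show ?thesis .
  qed
  then show ?thesis by auto
qed

lemma unit_nth: "j < 28 \<Longrightarrow> bl (unit i) ! j = (i = j)"
  apply (drule nat28)
  apply (elim disjE)
  apply (simp_all add: unit_def)
  done

lemma pow_img: "(S_rel ^^ k) `` {c} = {d. bl ((F ^^ k) (unit (e c))) ! e d}"
proof (induction k)
  case 0
  show ?case using e_inj[unfolded inj_def] by (auto simp: unit_nth e_lt)
next
  case (Suc k)
  have "(S_rel ^^ Suc k) `` {c} = S_rel `` ((S_rel ^^ k) `` {c})"
    by (simp add: relcomp_Image)
  also have "\<dots> = {d. bl ((F ^^ Suc k) (unit (e c))) ! e d}"
    unfolding Suc img_step by simp
  finally show ?case .
qed

lemma rel_ext: "(\<And>c. R `` {c} = R' `` {c}) \<Longrightarrow> R = R'"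
  by auto

lemma bv_ext: "(\<And>i. i < 28 \<Longrightarrow> bl x ! i = bl y ! i) \<Longrightarrow> x = y"
proof -
  assume h: "\<And>i. i < 28 \<Longrightarrow> bl x ! i = bl y ! i"
  have "length (bl x) = 28" "length (bl y) = 28" by (cases x, simp, cases y, simp)
  then have "bl x = bl y" using h by (simp add: nth_equalityI)
  then show "x = y" by (cases x; cases y) simp
qed

lemma pow_eq_bv: "S_rel ^^ k = S_rel ^^ j \<Longrightarrow> (F ^^ k) (unit (e c)) = (F ^^ j) (unit (e c))"
proof -
  assume h: "S_rel ^^ k = S_rel ^^ j"
  have s: "{d. bl ((F ^^ k) (unit (e c))) ! e d} = {d. bl ((F ^^ j) (unit (e c))) ! e d}"
    using pow_img[of k c] pow_img[of j c] h by simp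
  show ?thesis
  proof (rule bv_ext)
    fix i :: nat assume "i < 28"
    then obtain d where "e d = i" using e_surj by blast
    then show "bl ((F ^^ k) (unit (e c))) ! i = bl ((F ^^ j) (unit (e c))) ! i"
      using s by blast
  qed
qed

lemma F7: "(F ^^ 7) x = F (F (F (F (F (F (F x))))))" by (simp add: numeral_eq_Suc)
lemma F6: "(F ^^ 6) x = F (F (F (F (F (F x)))))" by (simp add: numeral_eq_Suc)
lemma F5: "(F ^^ 5) x = F (F (F (F (F x))))" by (simp add: numeral_eq_Suc)
lemma F4: "(F ^^ 4) x = F (F (F (F x)))" by (simp add: numeral_eq_Suc)
lemma F3: "(F ^^ 3) x = F (F (F x))" by (simp add: numeral_eq_Suc)
lemma F2: "(F ^^ 2) x = F (F x)" by (simp add: numeral_eq_Suc)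
lemma F1: "(F ^^ 1) x = F x" by simp
lemma F0: "(F ^^ 0) x = x" by simp

lemma F75: "i < 28 \<Longrightarrow> (F ^^ 7) (unit i) = (F ^^ 5) (unit i)"
  apply (simp only: F7 F5)
  apply (drule nat28)
  apply (elim disjE)
  apply (simp_all add: unit_def)
  done

lemma part1: "S_rel ^^ 7 = S_rel ^^ 5"
  by (rule rel_ext) (simp add: pow_img F75 e_lt)

lemma nat7: "(y::nat) < 7 \<Longrightarrow> y = 0 \<or> y = 1 \<or> y = 2 \<or> y = 3 \<or> y = 4 \<or> y = 5 \<or> y = 6"
  by arith

lemma e0: "e (Maj 0) = 0" by (simp add: e_def bit0.Rep_0)

lemma part2: "inj_on (\<lambda>k. S_rel ^^ k) {..<7}"
proof (rule inj_onI)
  fix k j assume k: "k \<in> {..<7}" and j: "j \<in> {..<7}" and h: "S_rel ^^ k = S_rel ^^ j"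
  have "(F ^^ k) (unit 0) = (F ^^ j) (unit 0)" using pow_eq_bv[OF h, of "Maj 0"] e0 by simp
  then show "k = j"
    using nat7[of k] nat7[of j] k j
    apply simp
    apply (elim disjE)
    apply (simp_all only: F0 F1 F2 F3 F4 F5 F6)
    apply (simp_all add: unit_def)
    done
qed

theorem mainTheorem2:
  shows "(S_rel ^^ 7 = S_rel ^^ 5 \<and> inj_on (\<lambda>k. S_rel ^^ k) {..<7})"
  using part1 part2 by blast


end
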